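(* Let $\mathcal{D}_N$ denote the set of integer vectors $(f_0,\dots,f_6)\in\mathbb{Z}^7$ with $|f_j|\le N$ for all $j$ such that the binary sextic form $F(x,z)=\sum_{j=0}^6 f_jx^jz^{6-j}$ is not squarefree (i.e. $F=0$ or $F$ is divisible in $\mathbb{Z}[x,z]$ by the square of a non-constant form). Then $\#\mathcal{D}_N\asymp N^5$ as $N\to\infty$, i.e. there are constants $0<c_1<c_2$ with $c_1N^5\le\#\mathcal{D}_N\le c_2N^5$ for all $N\ge1$. Consequently the number $\#\mathcal{C}_N=(2N+1)^7-\#\mathcal{D}_N$ of squarefree such forms satisfies $\#\mathcal{C}_N=(2N)^7(1+O(N^{-1}))$.
   Context: $\mathcal{C}_N$ is the set of integer vectors $(f_0,\dots,f_6)$ with $|f_j|\le N$ for which $F(x,z)=\sum_j f_jx^jz^{6-j}$ is a nonzero squarefree binary sextic form; these correspond to genus-2 curves $y^2=F(x,z)$ in the weighted projective plane with weights $1,3,1$ for $x,y,z$. *)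

theory Defs
  imports "HOL-Computational_Algebra.Polynomial"
begin

text \<open>Bivariate integer polynomials Z[x,z] are represented as int poly poly:
  the outer variable is z, the inner variable is x.  So coeff (coeff G i) j
  is the coefficient of x^j z^i.\<close>

definition hom_form :: "nat \<Rightarrow> int poly poly \<Rightarrow> bool" where
  "hom_form d G \<longleftrightarrow> (\<forall>i j. coeff (coeff G i) j \<noteq> 0 \<longrightarrow> i + j = d)"

definition nonconst_form :: "int poly poly \<Rightarrow> bool" where
  "nonconst_form G \<longleftrightarrow> G \<noteq> 0 \<and> (\<exists>d\<ge>1. hom_form d G)"

definition sextic_form :: "int list \<Rightarrow> int poly poly" where
  "sextic_form fs = (\<Sum>j<7. monom (monom (fs ! j) j) (6 - j))"

definition squarefree_form :: "int poly poly \<Rightarrow> bool" where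
  "squarefree_form F \<longleftrightarrow> F \<noteq> 0 \<and> \<not> (\<exists>G. nonconst_form G \<and> G ^ 2 dvd F)"

definition box :: "nat \<Rightarrow> int list set" where
  "box N = {fs. length fs = 7 \<and> (\<forall>j<7. \<bar>fs ! j\<bar> \<le> int N)}"

definition D_set :: "nat \<Rightarrow> int list set" where
  "D_set N = {fs \<in> box N. \<not> squarefree_form (sextic_form fs)}"

definition C_set :: "nat \<Rightarrow> int list set" where
  "C_set N = {fs \<in> box N. squarefree_form (sextic_form fs)}"

end

theory Submission
  imports Defs "Berlekamp_Zassenhaus.Factor_Bound"
begin


definition upoly :: "int list \<Rightarrow> int poly" where
  "upoly fs = (\<Sum>j<7. Polynomial.monom (fs ! j) j)"

lemma coeff_upoly: "poly.coeff (upoly fs) k = (if k < 7 then fs ! k else 0)"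
  unfolding upoly_def by (simp add: coeff_sum coeff_monom)

lemma poly_sextic: "poly (sextic_form fs) 1 = upoly fs"
  unfolding sextic_form_def upoly_def by (simp add: poly_sum poly_monom)

lemma coeff_sextic0: "poly.coeff (sextic_form fs) 0 = Polynomial.monom (fs ! 6) 6"
  unfolding sextic_form_def by (simp add: coeff_sum coeff_monom eval_nat_numeral lessThan_Suc)

lemma coeff_sextic1: "poly.coeff (sextic_form fs) 1 = Polynomial.monom (fs ! 5) 5"
  unfolding sextic_form_def by (simp add: coeff_sum coeff_monom eval_nat_numeral lessThan_Suc)

lemma hom_poly1: assumes "hom_form d G"
  shows "poly.coeff (poly G 1) d = poly.coeff (poly.coeff G 0) d"
proof -
  have "poly G 1 = (\<Sum>i\<le>degree G. poly.coeff G i)" by (simp add: poly_altdef)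
  hence "poly.coeff (poly G 1) d = (\<Sum>i\<le>degree G. poly.coeff (poly.coeff G i) d)"
    by (simp add: coeff_sum)
  also have "\<dots> = (\<Sum>i\<le>degree G. if i = 0 then poly.coeff (poly.coeff G 0) d else 0)"
    using assms unfolding hom_form_def by (intro sum.cong) (auto, metis add_cancel_right_left less_irrefl)
  also have "\<dots> = poly.coeff (poly.coeff G 0) d" by simp
  finally show ?thesis .
qed

lemma reduce:
  assumes "fs \<in> D_set N"
  shows "fs = replicate 7 0 \<or> (fs ! 5 = 0 \<and> fs ! 6 = 0) \<or>
         (upoly fs \<noteq> 0 \<and> (\<exists>g h. degree g \<ge> 1 \<and> upoly fs = g ^ 2 * h))"
proof -
  have len: "length fs = 7" and ns: "\<not> squarefree_form (sextic_form fs)"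
    using assms by (auto simp: D_set_def box_def)
  show ?thesis
  proof (cases "upoly fs = 0")
    case True
    have "fs = replicate 7 0"
    proof (rule nth_equalityI)
      fix i assume "i < length fs"
      thus "fs ! i = replicate 7 0 ! i" using True coeff_upoly[of fs i] len by auto
    qed (simp add: len)
    thus ?thesis by simp
  next
    case False
    hence F0: "sextic_form fs \<noteq> 0" using poly_sextic[of fs] by auto
    then obtain G where G: "nonconst_form G" "G ^ 2 dvd sextic_form fs"
      using ns by (auto simp: squarefree_form_def)
    then obtain K where K: "sextic_form fs = G ^ 2 * K" by (auto elim: dvdE)
    obtain d where d: "d \<ge> 1" "hom_form d G" using G(1) by (auto simp: nonconst_form_def)
    show ?thesis
    proof (cases "degree (poly G 1) \<ge> 1")
      case True
      have "upoly fs = (poly G 1) ^ 2 * poly K 1"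
        using K poly_sextic[of fs] by (simp add: poly_mult poly_power)
      thus ?thesis using True False by blast
    next
      case deg: False
      have "poly.coeff (poly.coeff G 0) j = 0" for j
      proof (cases "j = d")
        case True
        have "poly.coeff (poly G 1) d = 0" using deg d(1) by (simp add: coeff_eq_0)
        thus ?thesis using hom_poly1[OF d(2)] True by simp
      next
        case False thus ?thesis using d(2) unfolding hom_form_def by (metis add_0)
      qed
      hence G0: "poly.coeff G 0 = 0" by (simp add: poly_eq_iff)
      have c0: "poly.coeff (sextic_form fs) 0 = 0" unfolding K
        by (simp add: power2_eq_square coeff_mult G0)
      have c1: "poly.coeff (sextic_form fs) 1 = 0" unfolding K
        by (simp add: power2_eq_square coeff_mult G0 mult.assoc)
      have "fs ! 6 = 0" using c0 coeff_sextic0[of fs] by simp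
      moreover have "fs ! 5 = 0" using c1 coeff_sextic1[of fs] by simp
      ultimately show ?thesis by simp
    qed
  qed
qed



lemma mahler_mult: "mahler_measure (f * g) = mahler_measure f * mahler_measure g"
  unfolding mahler_measure_def of_int_poly_hom.hom_mult measure_eq_prod ..

lemma coeff_le_mahler:
  fixes g :: "int poly" assumes "degree g \<le> n"
  shows "real_of_int \<bar>poly.coeff g k\<bar> \<le> 2 ^ n * mahler_measure g"
proof -
  have "degree g choose k \<le> 2 ^ degree g" by (rule binomial_le_pow2)
  hence "real (degree g choose k) \<le> real (2 ^ degree g)" by (simp only: of_nat_le_iff)
  hence "real (degree g choose k) \<le> 2 ^ degree g" by simp
  also have "(2::real) ^ degree g \<le> 2 ^ n" using assms by (simp add: power_increasing)
  finally have "real (degree g choose k) * mahler_measure g \<le> 2 ^ n * mahler_measure g"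
    by (rule mult_right_mono) (rule mahler_measure_ge_0)
  with Mignotte_bound[of g k] show ?thesis by linarith
qed

lemma sq_le: "\<bar>c::int\<bar> \<le> b \<Longrightarrow> c * c \<le> b * b"
  using mult_mono[of "\<bar>c\<bar>" b "\<bar>c\<bar>" b] by (simp add: abs_mult_self_eq)

lemma landau_bound:
  fixes p :: "int poly" assumes "p \<noteq> 0" "degree p \<le> 6" "\<forall>k. \<bar>poly.coeff p k\<bar> \<le> int N"
  shows "mahler_measure p \<le> 3 * real N"
proof -
  have "\<forall>c\<in>set (coeffs p). \<bar>c\<bar> \<le> int N"
    using forall_coeffs_conv[of "\<lambda>c. \<bar>c\<bar> \<le> int N" p] assms(3) by simp
  hence "(\<Sum>a\<leftarrow>coeffs p. a * a) \<le> (\<Sum>a\<leftarrow>coeffs p. int N * int N)"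
    by (intro sum_list_mono) (use sq_le in blast)
  also have "\<dots> = int (length (coeffs p)) * (int N * int N)" by (simp add: sum_list_triv)
  also have "\<dots> \<le> 9 * (int N * int N)"
    using length_coeffs_degree[OF assms(1)] assms(2) by (intro mult_right_mono) auto
  finally have "real_of_int (\<Sum>a\<leftarrow>coeffs p. a * a) \<le> real_of_int (9 * (int N * int N))"
    by (simp only: of_int_le_iff)
  hence s: "real_of_int (\<Sum>a\<leftarrow>coeffs p. a * a) \<le> (3 * real N)^2"
    by (simp add: power2_eq_square)
  have "sqrt (real_of_int (\<Sum>a\<leftarrow>coeffs p. a * a)) \<le> 3 * real N"
    using real_sqrt_le_mono[OF s] by (simp only: real_sqrt_abs)
  with Landau_inequality_mahler_measure[of p] show ?thesis by linarith
qed

lemma key: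
  fixes p g h :: "int poly"
  assumes p0: "p \<noteq> 0" and pe: "p = g ^ 2 * h" and dg: "degree g \<ge> 1"
    and cb: "\<forall>k. \<bar>poly.coeff p k\<bar> \<le> int N" and dp: "degree p \<le> 6"
  shows "\<exists>m::nat. 1 \<le> m \<and> m ^ 2 \<le> 192 * N \<and> degree g \<le> 3 \<and> (\<forall>k. \<bar>poly.coeff g k\<bar> \<le> int m)
          \<and> degree h \<le> 4 \<and> (\<forall>k. \<bar>poly.coeff h k\<bar> \<le> int (3072 * N div m ^ 2))"
proof -
  have g0: "g \<noteq> 0" and h0: "h \<noteq> 0" using p0 pe by auto
  have "degree p = 2 * degree g + degree h" unfolding pe using g0 h0
    by (simp add: degree_mult_eq degree_power_eq)
  hence dg3: "degree g \<le> 3" and dh4: "degree h \<le> 4" using dp dg by auto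
  define M where "M = mahler_measure"
  have Mp: "M p = M g ^ 2 * M h" unfolding pe M_def power2_eq_square mahler_mult ..
  have Mg1: "M g \<ge> 1" and Mh1: "M h \<ge> 1" unfolding M_def using g0 h0 mahler_measure_poly_ge_1 by auto
  have Mpb: "M p \<le> 3 * real N" unfolding M_def using landau_bound[OF p0 dp cb] .
  define S where "S = (\<lambda>k. \<bar>poly.coeff g k\<bar>) ` {..degree g}"
  define m where "m = Max S"
  have fS: "finite S" "S \<noteq> {}" unfolding S_def by auto
  have mS: "m \<in> S" unfolding m_def using fS by (rule Max_in)
  then obtain k0 where k0: "m = \<bar>poly.coeff g k0\<bar>" unfolding S_def by auto
  have gm: "\<bar>poly.coeff g k\<bar> \<le> m" for k
  proof (cases "k \<le> degree g")
    case True thus ?thesis unfolding m_def using fS by (intro Max_ge) (auto simp: S_def)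
  next
    case False thus ?thesis using mS unfolding S_def by (auto simp: coeff_eq_0)
  qed
  have "m \<ge> \<bar>lead_coeff g\<bar>" using gm by simp
  moreover have "lead_coeff g \<noteq> 0" using g0 by simp
  ultimately have m1: "m \<ge> 1" by linarith
  have mM: "real_of_int m \<le> 8 * M g" unfolding k0 M_def
    using coeff_le_mahler[OF dg3, of k0] by simp
  have hM: "real_of_int \<bar>poly.coeff h k\<bar> \<le> 16 * M h" for k unfolding M_def
    using coeff_le_mahler[OF dh4, of k] by simp
  have m2: "(real_of_int m)^2 \<le> 64 * (M g)^2"
    using power_mono[OF mM, of 2] m1 by (simp add: power_mult_distrib)
  have "(M g)^2 \<le> (M g)^2 * M h" using Mh1 by (simp add: mult_le_cancel_left1)
  hence m2b: "(real_of_int m)^2 \<le> 192 * real N" using m2 Mp Mpb by linarith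
  define mn where "mn = nat m"
  have mn: "real mn = real_of_int m" "int mn = m" unfolding mn_def using m1 by auto
  have "real (mn ^ 2) \<le> real (192 * N)" using m2b mn(1) by simp
  hence A: "mn ^ 2 \<le> 192 * N" by (simp only: of_nat_le_iff)
  have B: "\<bar>poly.coeff h k\<bar> \<le> int (3072 * N div mn ^ 2)" for k
  proof -
    have "(real_of_int m)^2 * real_of_int \<bar>poly.coeff h k\<bar> \<le> (64 * (M g)^2) * (16 * M h)"
      by (rule mult_mono[OF m2 hM]) auto
    also have "\<dots> = 1024 * M p" using Mp by simp
    also have "\<dots> \<le> 3072 * real N" using Mpb by simp
    finally have "real (mn ^ 2 * nat \<bar>poly.coeff h k\<bar>) \<le> real (3072 * N)" using mn(1) by simp
    hence "mn ^ 2 * nat \<bar>poly.coeff h k\<bar> \<le> 3072 * N" by linarith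
    moreover have "mn ^ 2 > 0" using m1 mn by simp
    ultimately have "nat \<bar>poly.coeff h k\<bar> \<le> 3072 * N div mn ^ 2"
      by (metis div_le_mono nonzero_mult_div_cancel_left less_not_refl2)
    thus ?thesis by linarith
  qed
  have "\<forall>k. \<bar>poly.coeff g k\<bar> \<le> int mn" using gm mn(2) by simp
  moreover have "1 \<le> mn" using m1 mn(2) by simp
  ultimately show ?thesis using A B dg3 dh4 by blast
qed


definition polyset :: "nat \<Rightarrow> nat \<Rightarrow> int poly set" where
  "polyset n b = {h. degree h \<le> n \<and> (\<forall>k. \<bar>poly.coeff h k\<bar> \<le> int b)}"

lemma polyset_card: "finite (polyset n b) \<and> card (polyset n b) \<le> (2*b+1)^(n+1)"
proof -
  define f where "f = (\<lambda>h::int poly. restrict (poly.coeff h) {..n})"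
  define P where "P = PiE {..n} (\<lambda>_. {-int b..int b})"
  have inj: "inj_on f (polyset n b)"
  proof (rule inj_onI)
    fix g h assume g: "g \<in> polyset n b" and h: "h \<in> polyset n b" and e: "f g = f h"
    show "g = h"
    proof (rule poly_eqI)
      fix k show "poly.coeff g k = poly.coeff h k"
      proof (cases "k \<le> n")
        case True thus ?thesis using fun_cong[OF e, of k] by (simp add: f_def)
      next
        case False thus ?thesis using g h by (auto simp: polyset_def coeff_eq_0)
      qed
    qed
  qed
  have sub: "f ` polyset n b \<subseteq> P"
  proof
    fix y assume "y \<in> f ` polyset n b"
    then obtain h where h: "h \<in> polyset n b" and y: "y = f h" by auto
    have "poly.coeff h k \<in> {-int b..int b}" for k
    proof -
      have "\<bar>poly.coeff h k\<bar> \<le> int b" using h unfolding polyset_def by blast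
      thus ?thesis by (auto simp: abs_le_iff)
    qed
    thus "y \<in> P" unfolding y f_def P_def by auto
  qed
  have fP: "finite P" unfolding P_def by (simp add: finite_PiE)
  have cb: "card {-int b..int b} = 2*b+1"
  proof -
    have "card {-int b..int b} = nat (int (2*b+1))" by simp
    thus ?thesis by (simp only: nat_int)
  qed
  have "card P = (\<Prod>i\<in>{..n}. card {-int b..int b})"
    unfolding P_def by (rule card_PiE) simp
  also have "\<dots> = (2*b+1)^(n+1)" by (simp only: cb prod_constant card_atMost) simp
  finally have cP: "card P = (2*b+1)^(n+1)" .
  show ?thesis using inj sub fP cP inj_on_finite[OF inj sub fP] card_inj_on_le[OF inj sub fP] by simp
qed

lemma sum_inv_sq: "(\<Sum>m\<in>{1..n}. 1 / (real m)^2) \<le> 2 - 1 / real (max n 1)"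
proof (induction n)
  case 0 thus ?case by simp
next
  case (Suc n)
  show ?case
  proof (cases "n = 0")
    case True thus ?thesis by simp
  next
    case False
    have "(\<Sum>m\<in>{1..Suc n}. 1 / (real m)^2) = (\<Sum>m\<in>{1..n}. 1 / (real m)^2) + 1 / (real (Suc n))^2"
      by simp
    also have "\<dots> \<le> 2 - 1 / real n + 1 / (real (Suc n))^2" using Suc False by simp
    also have "\<dots> \<le> 2 - 1 / real (Suc n)"
    proof -
      have e: "1 / real n - 1 / real (Suc n) = 1 / (real n * real (Suc n))"
        using False by (simp add: field_simps)
      have "1 / (real (Suc n))^2 \<le> 1 / (real n * real (Suc n))"
        using False by (intro divide_left_mono) (auto simp: power2_eq_square)
      hence "1 / (real (Suc n))^2 \<le> 1 / real n - 1 / real (Suc n)" using e by simp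
      thus ?thesis by simp
    qed
    finally show ?thesis by simp
  qed
qed

lemma term_bound:
  assumes m1: "1 \<le> m" and mN: "m^2 \<le> 192*N"
  shows "real ((2*m+1)^4 * (2*(3072*N div m^2)+1)^5) \<le> 81 * 6336^5 * real N^5 / (real m)^2"
proof -
  define x where "x = real m"
  have x1: "x \<ge> 1" using m1 by (simp add: x_def)
  have "real (m^2) \<le> real (192*N)" using mN by (simp only: of_nat_le_iff)
  hence xN: "x^2 \<le> 192 * real N" unfolding x_def by simp
  have x2p: "x^2 > 0" using x1 by simp
  have B: "real (3072*N div m^2) \<le> 3072 * real N / x^2"
    using of_nat_div_le_of_nat[of "3072*N" "m^2"] by (simp add: x_def)
  have one: "1 \<le> 192 * real N / x^2" using xN x2p by (simp add: field_simps)
  have Y: "real (2*(3072*N div m^2)+1) \<le> 6336 * real N / x^2"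
  proof -
    have "real (2*(3072*N div m^2)+1) = 2 * real (3072*N div m^2) + 1" by simp
    also have "\<dots> \<le> 2 * (3072 * real N / x^2) + 192 * real N / x^2" using B one by linarith
    also have "\<dots> = 6336 * real N / x^2" by (simp add: field_simps)
    finally show ?thesis .
  qed
  have X: "real ((2*m+1)^4) \<le> 81 * x^4"
  proof -
    have "real ((2*m+1)^4) = (2*x+1)^4" by (simp add: x_def add.commute)
    also have "\<dots> \<le> (3*x)^4" using x1 by (intro power_mono) auto
    also have "\<dots> = 81 * x^4" by (simp add: power_mult_distrib)
    finally show ?thesis .
  qed
  have "real ((2*m+1)^4 * (2*(3072*N div m^2)+1)^5) = real ((2*m+1)^4) * (real (2*(3072*N div m^2)+1))^5"
    by simp
  also have "\<dots> \<le> (81 * x^4) * (6336 * real N / x^2)^5"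
    by (intro mult_mono X power_mono Y) auto
  also have "\<dots> = 81 * 6336^5 * real N^5 / x^6"
    using x2p by (simp add: field_simps power_mult_distrib)
  also have "\<dots> \<le> 81 * 6336^5 * real N^5 / x^2"
  proof (rule divide_left_mono)
    show "x^2 \<le> x^6" using x1 by (intro power_increasing) auto
  qed (use x2p in auto)
  finally show ?thesis by (simp add: x_def)
qed

lemma expand7: "(2*x+1::real)^7 - (2*x)^7 = 448*x^6 + 672*x^5 + 560*x^4 + 280*x^3 + 84*x^2 + 14*x + 1"
  by (simp add: eval_nat_numeral algebra_simps)

lemma diff7: assumes "(x::real) \<ge> 1" shows "(2*x+1)^7 - (2*x)^7 \<le> 2059 * x^6"
proof -
  have "x^k \<le> x^6" if "k \<le> 6" for k using assms that by (intro power_increasing) auto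
  from this[of 5] this[of 4] this[of 3] this[of 2] this[of 1] this[of 0]
  show ?thesis unfolding expand7 by simp
qed


definition Sset :: "nat \<Rightarrow> int list set" where
  "Sset N = {fs \<in> box N. upoly fs \<noteq> 0 \<and> (\<exists>g h. degree g \<ge> 1 \<and> upoly fs = g ^ 2 * h)}"

lemma box_alt: "box N = {xs. set xs \<subseteq> {-int N..int N} \<and> length xs = 7}"
unfolding box_def
proof (rule Collect_cong, rule iffI)
  fix xs assume "length xs = 7 \<and> (\<forall>j<7. \<bar>xs ! j\<bar> \<le> int N)"
  hence l: "length xs = 7" and b: "\<forall>j<7. \<bar>xs ! j\<bar> \<le> int N" by auto
  have "set xs \<subseteq> {-int N..int N}"
  proof
    fix x assume "x \<in> set xs"
    then obtain j where "j < 7" "xs ! j = x" using l by (auto simp: in_set_conv_nth)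
    thus "x \<in> {-int N..int N}" using b by (auto simp: abs_le_iff)
  qed
  thus "set xs \<subseteq> {-int N..int N} \<and> length xs = 7" using l by simp
next
  fix xs assume "set xs \<subseteq> {-int N..int N} \<and> length xs = 7"
  hence l: "length xs = 7" and s: "set xs \<subseteq> {-int N..int N}" by auto
  have "\<bar>xs ! j\<bar> \<le> int N" if "j < 7" for j
  proof -
    have "xs ! j \<in> set xs" using that l by simp
    thus ?thesis using s by (auto simp: abs_le_iff)
  qed
  thus "length xs = 7 \<and> (\<forall>j<7. \<bar>xs ! j\<bar> \<le> int N)" using l by simp
qed

lemma card_interval: "card {-int N..int N} = 2*N+1"
proof -
  have "card {-int N..int N} = nat (int (2*N+1))" by simp
  thus ?thesis by (simp only: nat_int)
qed

lemma lists_card: "card {xs. set xs \<subseteq> {-int N..int N} \<and> length xs = n} = (2*N+1)^n"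
  using card_lists_length_eq[of "{-int N..int N}" n] by (simp only: card_interval finite_atLeastAtMost_int)

lemma lists_finite: "finite {xs. set xs \<subseteq> {-int N..int N} \<and> length xs = n}"
  by (rule finite_lists_length_eq) simp

lemma box_card: "card (box N) = (2*N+1)^7" and box_finite: "finite (box N)"
  unfolding box_alt by (rule lists_card, rule lists_finite)

lemma upoly_inj: "inj_on upoly (box N)"
proof (rule inj_onI)
  fix xs ys assume x: "xs \<in> box N" and y: "ys \<in> box N" and e: "upoly xs = upoly ys"
  have l: "length xs = 7" "length ys = 7" using x y by (auto simp: box_def)
  show "xs = ys"
  proof (rule nth_equalityI)
    fix i assume "i < length xs"
    thus "xs ! i = ys ! i" using arg_cong[OF e, of "\<lambda>p. poly.coeff p i"] l by (simp add: coeff_upoly)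
  qed (use l in simp)
qed

lemma upoly_deg: "degree (upoly fs) \<le> 6"
  by (rule degree_le) (simp add: coeff_upoly)

lemma upoly_bound: "fs \<in> box N \<Longrightarrow> \<bar>poly.coeff (upoly fs) k\<bar> \<le> int N"
  by (auto simp: coeff_upoly box_def)

lemma S_card: "real (card (Sset N)) \<le> 162 * 6336^5 * real N^5"
proof -
  define I where "I = {m::nat. 1 \<le> m \<and> m^2 \<le> 192*N}"
  define B where "B = (\<lambda>m::nat. 3072*N div m^2)"
  define T where "T = (\<Union>m\<in>I. polyset 3 m \<times> polyset 4 (B m))"
  have IK: "I \<subseteq> {1..192*N}"
  proof
    fix m assume "m \<in> I"
    hence "1 \<le> m" "m^2 \<le> 192*N" by (auto simp: I_def)
    moreover have "m \<le> m^2" by (simp add: power2_eq_square)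
    ultimately show "m \<in> {1..192*N}" by simp
  qed
  have fI: "finite I" using IK finite_subset by blast
  have fT: "finite T" unfolding T_def using fI polyset_card by auto
  have sub: "upoly ` Sset N \<subseteq> (\<lambda>(g,h). g^2*h) ` T"
  proof
    fix p assume "p \<in> upoly ` Sset N"
    then obtain fs where fs: "fs \<in> box N" "upoly fs \<noteq> 0" and p: "p = upoly fs"
      and gh: "\<exists>g h. degree g \<ge> 1 \<and> upoly fs = g ^ 2 * h" by (auto simp: Sset_def)
    obtain g h where g: "degree g \<ge> 1" and e: "upoly fs = g^2*h" using gh by blast
    obtain m where m: "1 \<le> m" "m ^ 2 \<le> 192 * N" "degree g \<le> 3" "\<forall>k. \<bar>poly.coeff g k\<bar> \<le> int m"
      "degree h \<le> 4" "\<forall>k. \<bar>poly.coeff h k\<bar> \<le> int (3072 * N div m ^ 2)"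
      using key[OF fs(2) e g _ upoly_deg] upoly_bound[OF fs(1)] by blast
    have "(g,h) \<in> T" unfolding T_def I_def B_def polyset_def using m by blast
    thus "p \<in> (\<lambda>(g,h). g^2*h) ` T" using p e by force
  qed
  have "card (Sset N) = card (upoly ` Sset N)"
    by (rule card_image[symmetric], rule inj_on_subset[OF upoly_inj]) (auto simp: Sset_def)
  also have "\<dots> \<le> card ((\<lambda>(g,h). g^2*h) ` T)" using sub fT by (intro card_mono) auto
  also have "\<dots> \<le> card T" by (rule card_image_le[OF fT])
  also have "\<dots> \<le> (\<Sum>m\<in>I. card (polyset 3 m \<times> polyset 4 (B m)))"
    unfolding T_def by (rule card_UN_le[OF fI])
  also have "\<dots> \<le> (\<Sum>m\<in>I. (2*m+1)^4 * (2*B m+1)^5)"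
  proof (rule sum_mono)
    fix m
    have a: "card (polyset 3 m) \<le> (2*m+1)^4" using polyset_card[of 3 m] by simp
    have b: "card (polyset 4 (B m)) \<le> (2*B m+1)^5" using polyset_card[of 4 "B m"] by simp
    show "card (polyset 3 m \<times> polyset 4 (B m)) \<le> (2*m+1)^4 * (2*B m+1)^5"
      unfolding card_cartesian_product by (rule mult_le_mono[OF a b])
  qed
  finally have c: "real (card (Sset N)) \<le> (\<Sum>m\<in>I. real ((2*m+1)^4 * (2*B m+1)^5))"
    by (simp only: of_nat_le_iff of_nat_sum[symmetric])
  also have "\<dots> \<le> (\<Sum>m\<in>I. 81 * 6336^5 * real N^5 * (1 / (real m)^2))"
    by (intro sum_mono) (use term_bound in \<open>auto simp: I_def B_def\<close>)
  also have "\<dots> \<le> (\<Sum>m\<in>{1..192*N}. 81 * 6336^5 * real N^5 * (1 / (real m)^2))"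
    by (rule sum_mono2) (use IK in auto)
  also have "\<dots> = 81 * 6336^5 * real N^5 * (\<Sum>m\<in>{1..192*N}. 1 / (real m)^2)"
    by (simp add: sum_distrib_left)
  also have "\<dots> \<le> 81 * 6336^5 * real N^5 * 2"
  proof (rule mult_left_mono)
    have "0 \<le> 1 / real (max (192*N) 1)" by simp
    thus "(\<Sum>m\<in>{1..192*N}. 1 / (real m)^2) \<le> 2" using sum_inv_sq[of "192*N"] by linarith
  qed simp
  finally show ?thesis by simp
qed



abbreviation "L5 N \<equiv> {xs. set xs \<subseteq> {-int N..int N} \<and> length xs = 5}"

lemma low_in_D:
  assumes l: "l \<in> L5 N" shows "0 # 0 # l \<in> D_set N"
proof -
  define G :: "int poly poly" where "G = Polynomial.monom (Polynomial.monom 1 1) 0"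
  define K :: "int poly poly" where "K = (\<Sum>j<5. Polynomial.monom (Polynomial.monom (l ! j) j) (4 - j))"
  have G2: "G ^ 2 = Polynomial.monom (Polynomial.monom 1 2) 0"
    unfolding G_def power2_eq_square by (simp add: mult_monom numeral_2_eq_2)
  have "sextic_form (0 # 0 # l) = (\<Sum>j<5. Polynomial.monom (Polynomial.monom (l ! j) (j+2)) (4 - j))"
    unfolding sextic_form_def by (simp add: sum.lessThan_Suc_shift eval_nat_numeral)
  also have "\<dots> = G ^ 2 * K" unfolding G2 K_def
    by (simp add: sum_distrib_left mult_monom add.commute)
  finally have e: "sextic_form (0 # 0 # l) = G ^ 2 * K" .
  have "hom_form 1 G" unfolding hom_form_def G_def by (auto simp: coeff_monom split: if_splits)
  moreover have "G \<noteq> 0" unfolding G_def by simp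
  ultimately have nc: "nonconst_form G" unfolding nonconst_form_def by auto
  have "\<not> squarefree_form (sextic_form (0 # 0 # l))"
    unfolding squarefree_form_def using nc e by auto
  moreover have "0 # 0 # l \<in> box N" using l unfolding box_alt by auto
  ultimately show ?thesis by (simp add: D_set_def)
qed

lemma D_finite: "finite (D_set N)"
  by (rule finite_subset[OF _ box_finite]) (auto simp: D_set_def)

lemma D_lower: "(2*N+1)^5 \<le> card (D_set N)"
proof -
  have "(2*N+1)^5 = card ((\<lambda>l. 0 # 0 # l) ` L5 N)"
    by (subst card_image) (auto simp: inj_on_def lists_card)
  also have "\<dots> \<le> card (D_set N)" using low_in_D D_finite by (intro card_mono) auto
  finally show ?thesis .
qed

lemma D_sub: "D_set N \<subseteq> {replicate 7 0} \<union> (\<lambda>l. l @ [0,0]) ` L5 N \<union> Sset N"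
proof
  fix fs assume fs: "fs \<in> D_set N"
  hence bx: "fs \<in> box N" by (simp add: D_set_def)
  hence l: "length fs = 7" and st: "set fs \<subseteq> {-int N..int N}" unfolding box_alt by auto
  from reduce[OF fs] consider "fs = replicate 7 0" | "fs ! 5 = 0 \<and> fs ! 6 = 0"
    | "upoly fs \<noteq> 0 \<and> (\<exists>g h. degree g \<ge> 1 \<and> upoly fs = g ^ 2 * h)" by blast
  thus "fs \<in> {replicate 7 0} \<union> (\<lambda>l. l @ [0,0]) ` L5 N \<union> Sset N"
  proof cases
    case 2
    have "fs = take 5 fs @ [0,0]"
    proof (rule nth_equalityI)
      fix i assume "i < length fs"
      hence "i < 5 \<or> i = 5 \<or> i = 6" using l by auto
      thus "fs ! i = (take 5 fs @ [0,0]) ! i" using 2 l by (auto simp: nth_append)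
    qed (use l in simp)
    moreover have "take 5 fs \<in> L5 N" using l st set_take_subset[of 5 fs] by auto
    ultimately show ?thesis by blast
  next
    case 3 thus ?thesis using bx by (simp add: Sset_def)
  qed simp
qed

lemma D_upper: "real (card (D_set N)) \<le> 1 + real ((2*N+1)^5) + 162 * 6336^5 * real N^5"
proof -
  have fS: "finite (Sset N)" by (rule finite_subset[OF _ box_finite]) (auto simp: Sset_def)
  have "card (D_set N) \<le> card ({replicate 7 0} \<union> (\<lambda>l. l @ [0,0]) ` L5 N \<union> Sset N)"
    using fS lists_finite by (intro card_mono[OF _ D_sub]) auto
  also have "\<dots> \<le> card ({replicate 7 0} \<union> (\<lambda>l. l @ [0,0]) ` L5 N) + card (Sset N)"
    by (rule card_Un_le)
  also have "\<dots> \<le> 1 + card ((\<lambda>l. l @ [0,0]) ` L5 N) + card (Sset N)"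
    using card_Un_le[of "{replicate 7 0}"] by simp
  also have "\<dots> \<le> 1 + (2*N+1)^5 + card (Sset N)"
    using card_image_le[OF lists_finite, of "\<lambda>l. l @ [0,0]" N 5] lists_card[of N 5] by simp
  finally have "real (card (D_set N)) \<le> real (1 + (2*N+1)^5 + card (Sset N))"
    by (simp only: of_nat_le_iff)
  thus ?thesis using S_card[of N] by simp
qed

theorem mainTheorem4:
  shows "(\<exists>c1 c2 :: real. 0 < c1 \<and> c1 < c2 \<and>
            (\<forall>N::nat. N \<ge> 1 \<longrightarrow>
               c1 * real N ^ 5 \<le> real (card (D_set N)) \<and>
               real (card (D_set N)) \<le> c2 * real N ^ 5))
       \<and> (\<exists>C :: real. \<forall>N::nat. N \<ge> 1 \<longrightarrow>
            \<bar>real (card (C_set N)) - (2 * real N) ^ 7\<bar> \<le> C * (2 * real N) ^ 7 / real N)"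
proof -
  define c2 :: real where "c2 = 1 + 243 + 162 * 6336^5"
  have up: "real (card (D_set N)) \<le> c2 * real N ^ 5" if N1: "N \<ge> 1" for N
  proof -
    define x where "x = real N"
    have x1: "x \<ge> 1" using N1 by (simp add: x_def)
    have p5: "1 \<le> x^5" using x1 by simp
    have "(2*x+1)^5 \<le> (3*x)^5" using x1 by (intro power_mono) auto
    hence q: "(2*x+1)^5 \<le> 243 * x^5" by (simp add: power_mult_distrib)
    have "real ((2*N+1)^5) = (2*x+1)^5" by (simp add: x_def add.commute)
    hence "real (card (D_set N)) \<le> 1 + (2*x+1)^5 + 162 * 6336^5 * x^5"
      using D_upper[of N] by (simp add: x_def)
    also have "\<dots> \<le> c2 * x^5" unfolding c2_def using p5 q by (simp add: algebra_simps)
    finally show ?thesis by (simp add: x_def)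
  qed
  have lo: "1 * real N ^ 5 \<le> real (card (D_set N))" for N
  proof -
    have "real N ^ 5 \<le> real ((2*N+1)^5)" by (simp add: power_mono)
    also have "\<dots> \<le> real (card (D_set N))" using D_lower[of N] by (simp only: of_nat_le_iff)
    finally show ?thesis by simp
  qed
  have part1: "\<exists>c1 c2 :: real. 0 < c1 \<and> c1 < c2 \<and>
            (\<forall>N::nat. N \<ge> 1 \<longrightarrow>
               c1 * real N ^ 5 \<le> real (card (D_set N)) \<and>
               real (card (D_set N)) \<le> c2 * real N ^ 5)"
    by (rule exI[of _ 1], rule exI[of _ c2]) (use up lo in \<open>auto simp: c2_def\<close>)
  define C :: real where "C = (2059 + c2) / 128"
  have part2: "\<bar>real (card (C_set N)) - (2 * real N) ^ 7\<bar> \<le> C * (2 * real N) ^ 7 / real N"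
    if N1: "N \<ge> 1" for N
  proof -
    define x where "x = real N"
    have x1: "x \<ge> 1" using N1 by (simp add: x_def)
    have Ceq: "C_set N = box N - D_set N" by (auto simp: C_set_def D_set_def)
    have "card (C_set N) = card (box N) - card (D_set N)"
      unfolding Ceq by (rule card_Diff_subset[OF D_finite]) (auto simp: D_set_def)
    moreover have "card (D_set N) \<le> card (box N)"
      by (rule card_mono[OF box_finite]) (auto simp: D_set_def)
    ultimately have "real (card (C_set N)) = real (card (box N)) - real (card (D_set N))" by simp
    also have "real (card (box N)) = (2*x+1)^7" by (simp add: box_card x_def add.commute)
    finally have cC: "real (card (C_set N)) = (2*x+1)^7 - real (card (D_set N))" .
    have d0: "0 \<le> real (card (D_set N))" by simp
    have dU: "real (card (D_set N)) \<le> c2 * x^5" using up[OF N1] by (simp add: x_def)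
    have df: "(2*x+1)^7 - (2*x)^7 \<le> 2059 * x^6" using diff7[OF x1] .
    have df0: "(2*x)^7 \<le> (2*x+1)^7" using x1 by (intro power_mono) auto
    have c2p: "0 \<le> c2" by (simp add: c2_def)
    have "x^5 \<le> x^6" using x1 by (intro power_increasing) auto
    hence "c2 * x^5 \<le> c2 * x^6" using c2p by (rule mult_left_mono)
    hence "\<bar>(2*x+1)^7 - real (card (D_set N)) - (2*x)^7\<bar> \<le> (2059 + c2) * x^6"
      using dU d0 df df0 by (simp add: algebra_simps abs_le_iff) linarith?
    also have "(2059 + c2) * x^6 = C * (2*x)^7 / x"
      using x1 unfolding C_def by (simp add: field_simps power_mult_distrib eval_nat_numeral)
    finally show ?thesis using cC by (simp add: x_def)
  qed
  show ?thesis using part1 part2 by blast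
qed

end
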